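(* Let $F$ be a field of characteristic $p\ge2$, let $l,m,n\ge2$ be integers with $p\mid n=lm$, and set $T=D_{n,l}\cap D_{n,m}\cap D_n^+$. (1) If $p\nmid l$, then for every monic original $f\in T$ there exist monic original $g^*,h^*\in F[x]$ of degrees $l$ and $m$, respectively, with $f=g^*\circ h^*$, $(g^* )'(h^* )'\ne0$, and $0\le\deg (h^* )'<m-l$. (2) If $p\mid l$, then for every monic original $f\in T$ there exist monic original $g,h\in F[x]$ of degrees $m$ and $l$, respectively, with $f=g\circ h$ and $\deg g'\le m-(m+1)/l$.
   Context: $g\circ h=g(h)$; monic means leading coefficient 1; original means value 0 at 0; $'$ is the formal derivative. A polynomial is decomposable if it equals $g\circ h$ with $\deg g,\deg h\ge2$; $D_n$ is the set of decomposable polynomials of degree $n$ in $F[x]$ and $D_n^+=D_n\setminus F[x^p]$. For a divisor $e$ of $n$, $D_{n,e}=\{g\circ h:\ \deg g=e,\ h\text{ monic},\ h(0)=0,\ \deg h=n/e\}$. *)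

theory Defs
  imports "HOL-Computational_Algebra.Polynomial"
begin

definition decomposable_deg :: "nat \<Rightarrow> 'a::field poly set" where
  "decomposable_deg n = {f. degree f = n \<and>
     (\<exists>g h. f = pcompose g h \<and> degree g \<ge> 2 \<and> degree h \<ge> 2)}"

definition poly_in_xp :: "nat \<Rightarrow> 'a::zero poly set" where
  "poly_in_xp p = {f. \<forall>i. coeff f i \<noteq> 0 \<longrightarrow> p dvd i}"

definition decomposable_plus :: "nat \<Rightarrow> 'a::field poly set" where
  "decomposable_plus n = decomposable_deg n - poly_in_xp CHAR('a)"

definition decomp_set :: "nat \<Rightarrow> nat \<Rightarrow> 'a::field poly set" where
  "decomp_set n e = {pcompose g h | g h. degree g = e \<and> lead_coeff h = 1 \<and>
     coeff h 0 = 0 \<and> degree h = n div e}"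

end

theory Submission
  imports Defs "HOL-Computational_Algebra.Computational_Algebra"
begin

lemma pderiv_deg_le: "degree (pderiv (p::'a::field poly)) \<le> degree p - 1"
proof (rule degree_le)
  show "\<forall>i>degree p - 1. coeff (pderiv p) i = 0"
    by (auto simp: coeff_pderiv coeff_eq_0)
qed

lemma pderiv_deg_dvd:
  assumes "CHAR('a) dvd degree (G::'a::field poly)" "pderiv G \<noteq> 0"
  shows "degree (pderiv G) + 2 \<le> degree G"
proof -
  have d: "degree G \<ge> 1"
  proof (rule ccontr)
    assume "\<not> degree G \<ge> 1"
    then have "degree G = 0" by simp
    then have "degree (pderiv G) = 0" using pderiv_deg_le[of G] by simp
    moreover have "coeff (pderiv G) 0 = 0" using \<open>degree G = 0\<close>
      by (simp add: coeff_pderiv coeff_eq_0)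
    ultimately show False using assms(2) by (metis leading_coeff_0_iff)
  qed
  have c: "coeff (pderiv G) (degree G - 1) = 0"
    using assms(1) d by (simp add: coeff_pderiv of_nat_eq_0_iff_char_dvd)
  have "degree (pderiv G) \<noteq> degree G - 1"
    using c assms(2) by (metis leading_coeff_0_iff)
  with pderiv_deg_le[of G] d show ?thesis by linarith
qed

lemma pderiv_deg_ndvd:
  assumes "\<not> CHAR('a) dvd degree (G::'a::field poly)" "degree G \<ge> 1"
  shows "degree (pderiv G) = degree G - 1"
proof -
  have "G \<noteq> 0" using assms(2) by auto
  have c: "coeff (pderiv G) (degree G - 1) \<noteq> 0"
    using assms \<open>G \<noteq> 0\<close> by (simp add: coeff_pderiv of_nat_eq_0_iff_char_dvd)
  hence "degree G - 1 \<le> degree (pderiv G)" by (rule le_degree)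
  with pderiv_deg_le[of G] show ?thesis by linarith
qed

lemma pderiv_nz:
  assumes "f \<notin> poly_in_xp CHAR('a)"
  shows "pderiv (f::'a::field poly) \<noteq> 0"
proof -
  obtain i where i: "coeff f i \<noteq> 0" "\<not> CHAR('a) dvd i"
    using assms unfolding poly_in_xp_def by auto
  have "i > 0" using i(2) by (cases i) auto
  then have "coeff (pderiv f) (i - 1) = of_nat i * coeff f i"
    by (simp add: coeff_pderiv)
  also have "\<dots> \<noteq> 0" using i by (simp add: of_nat_eq_0_iff_char_dvd)
  finally show ?thesis by auto
qed

lemma deg_pderiv_comp:
  assumes "pderiv (g \<circ>\<^sub>p h) \<noteq> (0::'a::field poly)"
  shows "degree (pderiv (g \<circ>\<^sub>p h)) = degree (pderiv g) * degree h + degree (pderiv h)"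
    "pderiv g \<noteq> 0" "pderiv h \<noteq> 0"
proof -
  have e: "pderiv (g \<circ>\<^sub>p h) = pderiv g \<circ>\<^sub>p h * pderiv h" by (rule pderiv_pcompose)
  have a: "pderiv g \<circ>\<^sub>p h \<noteq> 0" "pderiv h \<noteq> 0" using assms e by auto
  then show "pderiv h \<noteq> 0" by simp
  show "pderiv g \<noteq> 0" using a(1) by auto
  show "degree (pderiv (g \<circ>\<^sub>p h)) = degree (pderiv g) * degree h + degree (pderiv h)"
    using a by (simp add: e degree_mult_eq degree_pcompose)
qed

lemma decomp_norm:
  assumes "f \<in> decomp_set n e" "lead_coeff f = 1" "coeff f 0 = 0" "n div e > 0"
  obtains g h where "f = g \<circ>\<^sub>p h" "degree g = e" "lead_coeff g = 1" "coeff g 0 = 0"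
    "lead_coeff h = 1" "coeff h 0 = 0" "degree h = n div e"
proof -
  obtain g h where gh: "f = g \<circ>\<^sub>p h" "degree g = e" "lead_coeff h = 1" "coeff h 0 = 0"
    "degree h = n div e" using assms(1) unfolding decomp_set_def by auto
  have "lead_coeff g = 1" using assms(2,4) gh by (simp add: lead_coeff_comp)
  moreover have "coeff g 0 = 0" using assms(3) gh
    by (simp add: coeff_pcompose_0 poly_0_coeff_0)
  ultimately show ?thesis using that gh by blast
qed

theorem theorem4p18:
  fixes l m n p :: nat
  assumes charp: "CHAR('a::field) = p" and p2: "p \<ge> 2"
    and l2: "l \<ge> 2" and m2: "m \<ge> 2" and nlm: "n = l * m" and pn: "p dvd n"
  defines "T \<equiv> decomp_set n l \<inter> decomp_set n m \<inter> (decomposable_plus n :: 'a poly set)"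
  shows "(\<not> p dvd l \<longrightarrow>
           (\<forall>f \<in> T. lead_coeff f = 1 \<and> coeff f 0 = 0 \<longrightarrow>
             (\<exists>g h. lead_coeff g = 1 \<and> coeff g 0 = 0 \<and> lead_coeff h = 1 \<and> coeff h 0 = 0 \<and>
                degree g = l \<and> degree h = m \<and> f = pcompose g h \<and>
                pderiv g * pderiv h \<noteq> 0 \<and>
                int (degree (pderiv h)) < int m - int l)))
       \<and> (p dvd l \<longrightarrow>
           (\<forall>f \<in> T. lead_coeff f = 1 \<and> coeff f 0 = 0 \<longrightarrow>
             (\<exists>g h. lead_coeff g = 1 \<and> coeff g 0 = 0 \<and> lead_coeff h = 1 \<and> coeff h 0 = 0 \<and>
                degree g = m \<and> degree h = l \<and> f = pcompose g h \<and>
                real (degree (pderiv g)) \<le> real m - (real m + 1) / real l)))"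
proof -
 {
  fix f assume fT: "f \<in> T" and fn: "lead_coeff f = 1 \<and> coeff f 0 = 0"
  have ndl: "n div l = m" and ndm: "n div m = l" using nlm l2 m2 by auto
  have fd: "pderiv f \<noteq> 0" using fT unfolding T_def decomposable_plus_def
    using pderiv_nz[of f] by auto
  obtain g h where A: "f = g \<circ>\<^sub>p h" "degree g = l" "lead_coeff g = 1" "coeff g 0 = 0"
    "lead_coeff h = 1" "coeff h 0 = 0" "degree h = m"
    using decomp_norm[of f n l] fT fn ndl m2 unfolding T_def by auto
  obtain G H where B: "f = G \<circ>\<^sub>p H" "degree G = m" "lead_coeff G = 1" "coeff G 0 = 0"
    "lead_coeff H = 1" "coeff H 0 = 0" "degree H = l"
    using decomp_norm[of f n m] fT fn ndm l2 unfolding T_def by auto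
  note dA = deg_pderiv_comp[of g h, folded A(1), OF fd]
  note dB = deg_pderiv_comp[of G H, folded B(1), OF fd]
  have part1: "\<not> p dvd l \<longrightarrow> (\<exists>g h. lead_coeff g = 1 \<and> coeff g 0 = 0 \<and> lead_coeff h = 1 \<and> coeff h 0 = 0 \<and>
                degree g = l \<and> degree h = m \<and> f = pcompose g h \<and>
                pderiv g * pderiv h \<noteq> 0 \<and>
                int (degree (pderiv h)) < int m - int l)"
  proof
    assume pl: "\<not> p dvd l"
    have pr: "prime p" using charp p2 prime_CHAR_semidom[where 'a='a] by auto
    have pm: "p dvd m" using pr pn pl nlm by (simp add: prime_dvd_mult_iff)
    have e1: "degree (pderiv g) = l - 1" using pderiv_deg_ndvd[of g] pl A l2 charp by auto
    have e2: "degree (pderiv G) + 2 \<le> m" using pderiv_deg_dvd[of G] pm B dB charp by auto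
    have e3: "degree (pderiv H) \<le> l - 1" using pderiv_deg_le[of H] B by auto
    have "(l - 1) * m + degree (pderiv h) = degree (pderiv G) * l + degree (pderiv H)"
      using dA dB A B e1 by simp
    also have "\<dots> \<le> (m - 2) * l + (l - 1)" using e2 e3
      by (intro add_mono mult_right_mono) auto
    finally have "(l - 1) * m + degree (pderiv h) \<le> (m - 2) * l + (l - 1)" .
    then have "int ((l - 1) * m + degree (pderiv h)) \<le> int ((m - 2) * l + (l - 1))"
      by linarith
    then have "(int l - 1) * int m + int (degree (pderiv h)) \<le> (int m - 2) * int l + (int l - 1)"
      using l2 m2 by (simp add: of_nat_diff)
    then have "int (degree (pderiv h)) < int m - int l"
      by (simp add: algebra_simps)
    then show "\<exists>g h. lead_coeff g = 1 \<and> coeff g 0 = 0 \<and> lead_coeff h = 1 \<and> coeff h 0 = 0 \<and>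
                degree g = l \<and> degree h = m \<and> f = pcompose g h \<and>
                pderiv g * pderiv h \<noteq> 0 \<and>
                int (degree (pderiv h)) < int m - int l"
      using A dA by auto
  qed
  have part2: "p dvd l \<longrightarrow> (\<exists>g h. lead_coeff g = 1 \<and> coeff g 0 = 0 \<and> lead_coeff h = 1 \<and> coeff h 0 = 0 \<and>
                degree g = m \<and> degree h = l \<and> f = pcompose g h \<and>
                real (degree (pderiv g)) \<le> real m - (real m + 1) / real l)"
  proof
    assume pl: "p dvd l"
    note A0 = A and B0 = B
    obtain g h where A: "f = g \<circ>\<^sub>p h" "degree g = m" "lead_coeff g = 1" "coeff g 0 = 0"
      "lead_coeff h = 1" "coeff h 0 = 0" "degree h = l"
      using B0 by blast
    obtain G H where B: "f = G \<circ>\<^sub>p H" "degree G = l" "lead_coeff G = 1" "coeff G 0 = 0"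
      "lead_coeff H = 1" "coeff H 0 = 0" "degree H = m"
      using A0 by blast
    note dA = deg_pderiv_comp[of g h, folded A(1), OF fd]
    note dB = deg_pderiv_comp[of G H, folded B(1), OF fd]
    have e2: "degree (pderiv G) + 2 \<le> l" using pderiv_deg_dvd[of G] pl B dB charp by auto
    have e3: "degree (pderiv H) \<le> m - 1" using pderiv_deg_le[of H] B by auto
    have "degree (pderiv g) * l + degree (pderiv h) = degree (pderiv G) * m + degree (pderiv H)"
      using dA dB A B by simp
    also have "\<dots> \<le> (l - 2) * m + (m - 1)" using e2 e3
      by (intro add_mono mult_right_mono) auto
    finally have "degree (pderiv g) * l + degree (pderiv h) \<le> (l - 2) * m + (m - 1)" .
    then have "real (degree (pderiv g) * l + degree (pderiv h)) \<le> real ((l - 2) * m + (m - 1))"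
      by linarith
    then have "real (degree (pderiv g)) * real l + real (degree (pderiv h)) \<le> (real l - 2) * real m + (real m - 1)"
      using l2 m2 by (simp add: of_nat_diff)
    then have "real (degree (pderiv g)) * real l \<le> real m * real l - (real m + 1)"
      by (simp add: algebra_simps)
    then have "real (degree (pderiv g)) \<le> real m - (real m + 1) / real l"
      using l2 by (simp add: field_simps)
    then show "\<exists>g h. lead_coeff g = 1 \<and> coeff g 0 = 0 \<and> lead_coeff h = 1 \<and> coeff h 0 = 0 \<and>
                degree g = m \<and> degree h = l \<and> f = pcompose g h \<and>
                real (degree (pderiv g)) \<le> real m - (real m + 1) / real l"
      using A by blast
  qed
  note part1 part2
 }
 then show ?thesis unfolding T_def[symmetric] by blast
qed

end
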